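(* For every non-trivial finite Abelian group $(A,+)$ we have $n(A) \le 8|A|$.
   Context: For an integer $n\ge 1$, $\overleftrightarrow{K}_n$ denotes the complete digraph on $n$ vertices whose arc set consists of all ordered pairs $(x,y)$ of distinct vertices. For a set $A$, an $A$-arc-labelling of $\overleftrightarrow{K}_n$ is a function $w$ from the arc set of $\overleftrightarrow{K}_n$ to $A$. If $(A,+)$ is an Abelian group, $w$ is called zero-sum-free if there is no directed cycle (including directed cycles of length two, i.e. digons $x\to y\to x$) for which the sum of the arc-labels is $0$. For a non-trivial finite Abelian group $A$, $n(A)\ge 2$ is the smallest integer such that $\overleftrightarrow{K}_{n(A)}$ has no zero-sum-free $A$-arc-labelling, i.e. for every $A$-arc-labelling of $\overleftrightarrow{K}_{n(A)}$ there is a directed cycle whose arc-labels sum to zero. *)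

theory Defs
  imports Main
begin

text \<open>Vertices of the complete digraph on n vertices are 0,...,n-1; an arc-labelling is
 a function w with w x y the label of arc (x,y) (values with x = y or outside the vertex
 set are irrelevant).\<close>

definition zero_sum_free :: "nat \<Rightarrow> (nat \<Rightarrow> nat \<Rightarrow> 'a::ab_group_add) \<Rightarrow> bool" where
  "zero_sum_free n w \<longleftrightarrow>
     \<not> (\<exists>vs. distinct vs \<and> 2 \<le> length vs \<and> set vs \<subseteq> {..<n} \<and>
            (\<Sum>i<length vs. w (vs ! i) (vs ! (Suc i mod length vs))) = 0)"

definition nA :: "'a::{ab_group_add,finite} itself \<Rightarrow> nat" where
  "nA _ = (LEAST n. 2 \<le> n \<and> \<not> (\<exists>w :: nat \<Rightarrow> nat \<Rightarrow> 'a. zero_sum_free n w))"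

end

theory Submission imports Defs begin

definition cs :: "(nat \<Rightarrow> nat \<Rightarrow> 'a::ab_group_add) \<Rightarrow> nat list \<Rightarrow> 'a" where
  "cs w vs = (\<Sum>i<length vs. w (vs ! i) (vs ! (Suc i mod length vs)))"

definition cyc :: "nat list \<Rightarrow> nat set \<Rightarrow> bool" where
  "cyc vs V \<longleftrightarrow> distinct vs \<and> 2 \<le> length vs \<and> set vs \<subseteq> V"

definition sg :: "'a::ab_group_add set \<Rightarrow> bool" where
  "sg H \<longleftrightarrow> 0 \<in> H \<and> (\<forall>a\<in>H. \<forall>b\<in>H. a - b \<in> H)"

lemma sg_add: "sg H \<Longrightarrow> a \<in> H \<Longrightarrow> b \<in> H \<Longrightarrow> a + b \<in> H"
  unfolding sg_def by (metis diff_0 diff_minus_eq_add)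

lemma sg_sum: "sg H \<Longrightarrow> (\<forall>i\<in>I. f i \<in> H) \<Longrightarrow> sum f I \<in> H"
proof (induction I rule: infinite_finite_induct)
  case (insert x F) then show ?case by (simp add: sg_add)
qed (auto simp: sg_def)

fun psum :: "(nat \<Rightarrow> nat \<Rightarrow> 'a::ab_group_add) \<Rightarrow> nat list \<Rightarrow> 'a" where
  "psum w (a # b # xs) = w a b + psum w (b # xs)"
| "psum w _ = 0"

lemma psum_idx: "psum w vs = (\<Sum>i<length vs - 1. w (vs ! i) (vs ! Suc i))"
proof (induction w vs rule: psum.induct)
  case (1 w a b xs)
  have "length (a # b # xs) - 1 = Suc (length xs)" by simp
  then show ?case using 1 by (simp only: sum.lessThan_Suc_shift) simp
qed auto

lemma cs_psum: "vs \<noteq> [] \<Longrightarrow> cs w vs = psum w vs + w (last vs) (hd vs)"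
proof -
  assume ne: "vs \<noteq> []"
  then obtain L where L: "length vs = Suc L" by (cases vs) auto
  have "cs w vs = (\<Sum>i<L. w (vs ! i) (vs ! (Suc i mod Suc L))) + w (vs ! L) (vs ! 0)"
    unfolding cs_def L by simp
  also have "(\<Sum>i<L. w (vs ! i) (vs ! (Suc i mod Suc L))) = (\<Sum>i<L. w (vs ! i) (vs ! Suc i))"
    by (rule sum.cong) auto
  also have "\<dots> = psum w vs" using psum_idx[of w vs] L by simp
  finally show ?thesis using ne L by (simp add: last_conv_nth hd_conv_nth)
qed

lemma psum_snoc: "vs \<noteq> [] \<Longrightarrow> psum w (vs @ [u]) = psum w vs + w (last vs) u"
  by (induction vs rule: induct_list012) (auto simp: algebra_simps)

lemma psum_pot: "vs \<noteq> [] \<Longrightarrow> psum (\<lambda>a b. w a b + p a - p b) vs = psum w vs + p (hd vs) - p (last vs)"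
  by (induction vs rule: induct_list012) (auto simp: algebra_simps)

lemma cs_pot: "vs \<noteq> [] \<Longrightarrow> cs (\<lambda>a b. w a b + p a - p b) vs = cs w vs"
proof -
  assume ne: "vs \<noteq> []"
  show ?thesis
    unfolding cs_psum[OF ne] psum_pot[OF ne] by (simp add: algebra_simps)
qed

lemma cyc_in_sg:
  assumes "sg K" "cyc vs U" "\<forall>g\<in>U. \<forall>u\<in>U. g \<noteq> u \<longrightarrow> w g u \<in> K"
  shows "cs w vs \<in> K"
  unfolding cs_def
proof (rule sg_sum[OF assms(1)], intro ballI)
  fix i assume i: "i \<in> {..<length vs}"
  let ?L = "length vs"
  have d: "distinct vs" "2 \<le> ?L" "set vs \<subseteq> U" using assms(2) by (auto simp: cyc_def)
  have j: "Suc i mod ?L < ?L" using d(2) by (intro mod_less_divisor) auto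
  have ne: "i \<noteq> Suc i mod ?L"
  proof (cases "Suc i < ?L")
    case True then show ?thesis by simp
  next
    case False then have "Suc i = ?L" using i by simp
    then show ?thesis using d(2) by simp
  qed
  have "vs ! i \<noteq> vs ! (Suc i mod ?L)" using d(1) i j ne by (simp add: nth_eq_iff_index_eq)
  moreover have "vs ! i \<in> U" "vs ! (Suc i mod ?L) \<in> U" using d(3) i j nth_mem by auto
  ultimately show "w (vs ! i) (vs ! (Suc i mod ?L)) \<in> K" using assms(3) by blast
qed

lemma distinct_hd_last: "distinct p \<Longrightarrow> p \<noteq> [] \<Longrightarrow> hd p = last p \<Longrightarrow> p = [hd p]"
proof (cases p rule: rev_cases)
  case (snoc ys y)
  assume "distinct p" "hd p = last p"
  show ?thesis
  proof (cases ys)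
    case (Cons a zs)
    then show ?thesis using snoc \<open>distinct p\<close> \<open>hd p = last p\<close> by auto
  qed (use snoc in auto)
qed simp

lemma transl_surj: "finite T \<Longrightarrow> \<forall>s\<in>T. s + b \<in> T \<Longrightarrow> t \<in> T \<Longrightarrow> \<exists>s\<in>T. t = s + (b::'a::ab_group_add)"
proof -
  assume f: "finite T" and h: "\<forall>s\<in>T. s + b \<in> T" and t: "t \<in> T"
  have "(\<lambda>s. s + b) ` T = T" by (rule endo_inj_surj[OF f]) (use h in \<open>auto simp: inj_on_def\<close>)
  then show ?thesis using t by force
qed

lemma chain:
  fixes w :: "nat \<Rightarrow> nat \<Rightarrow> 'a::{ab_group_add,finite}" and H :: "'a set" and V :: "nat set"
  assumes sgH: "sg H" and finV: "finite V" and H2: "2 \<le> card H"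
    and cycH: "\<And>vs. cyc vs V \<Longrightarrow> cs w vs \<in> H \<and> cs w vs \<noteq> 0"
    and IH: "\<And>K U. sg K \<Longrightarrow> card K < card H \<Longrightarrow> U \<subseteq> V \<Longrightarrow>
               (\<And>vs. cyc vs U \<Longrightarrow> cs w vs \<in> K) \<Longrightarrow> card U < 4 * card K"
  shows "Used \<subseteq> V \<Longrightarrow> r \<in> Used \<Longrightarrow> x \<in> Used \<Longrightarrow>
    (\<forall>t\<in>T. \<exists>p. distinct p \<and> p \<noteq> [] \<and> hd p = r \<and> last p = x \<and> set p \<subseteq> Used \<and> psum w p = t) \<Longrightarrow>
    card Used + 1 \<le> 2 * card T \<Longrightarrow> card V < 4 * card H"
proof (induction "card (V - Used)" arbitrary: Used x T rule: less_induct)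
  case less
  note UV = less.prems(1) and rU = less.prems(2) and xU = less.prems(3)
    and paths = less.prems(4) and cardT = less.prems(5)
  have finU: "finite Used" using UV finV finite_subset by blast
  define K where "K = {a. \<forall>t\<in>T. t + a \<in> T}"
  show ?case
  proof (cases "\<exists>g u. g \<in> V - Used \<and> u \<in> V - Used \<and> g \<noteq> u \<and> w x g + w g u - w x u \<notin> K")
    case True
    then obtain g u where g: "g \<in> V - Used" and u: "u \<in> V - Used" and gu: "g \<noteq> u"
      and dK: "w x g + w g u - w x u \<notin> K" by blast
    then obtain t1 where t1: "t1 \<in> T" and t1n: "t1 + (w x g + w g u - w x u) \<notin> T"
      unfolding K_def by blast
    define T' where "T' = (\<lambda>t. t + w x u) ` T \<union> (\<lambda>t. t + (w x g + w g u)) ` T"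
    define Used' where "Used' = insert g (insert u Used)"
    have lt: "card (V - Used') < card (V - Used)"
    proof (rule psubset_card_mono)
      show "finite (V - Used)" using finV by simp
      show "V - Used' \<subset> V - Used" using g unfolding Used'_def by auto
    qed
    have UV': "Used' \<subseteq> V" using UV g u unfolding Used'_def by auto
    have paths': "\<forall>t\<in>T'. \<exists>p. distinct p \<and> p \<noteq> [] \<and> hd p = r \<and> last p = u \<and> set p \<subseteq> Used' \<and> psum w p = t"
    proof
      fix t' assume "t' \<in> T'"
      then consider (a) t where "t \<in> T" "t' = t + w x u" | (b) t where "t \<in> T" "t' = t + (w x g + w g u)"
        unfolding T'_def by blast
      then show "\<exists>p. distinct p \<and> p \<noteq> [] \<and> hd p = r \<and> last p = u \<and> set p \<subseteq> Used' \<and> psum w p = t'"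
      proof cases
        case a
        then obtain p where p: "distinct p" "p \<noteq> []" "hd p = r" "last p = x" "set p \<subseteq> Used" "psum w p = t"
          using paths by blast
        show ?thesis
        proof (intro exI[of _ "p @ [u]"] conjI)
          show "distinct (p @ [u])" using p u by auto
          show "set (p @ [u]) \<subseteq> Used'" using p unfolding Used'_def by auto
          show "psum w (p @ [u]) = t'" using p a by (simp add: psum_snoc)
        qed (use p in auto)
      next
        case b
        then obtain p where p: "distinct p" "p \<noteq> []" "hd p = r" "last p = x" "set p \<subseteq> Used" "psum w p = t"
          using paths by blast
        have e: "p @ [g, u] = (p @ [g]) @ [u]" by simp
        show ?thesis
        proof (intro exI[of _ "p @ [g, u]"] conjI)
          show "distinct (p @ [g, u])" using p u g gu by auto
          show "set (p @ [g, u]) \<subseteq> Used'" using p unfolding Used'_def by auto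
          have h1: "psum w (p @ [g]) = t + w x g" using p psum_snoc[of p w g] by simp
          have h2: "psum w (p @ [g, u]) = psum w (p @ [g]) + w g u"
            using psum_snoc[of "p @ [g]" w u] by simp
          show "psum w (p @ [g, u]) = t'" using h1 h2 b by (simp add: algebra_simps)
        qed (use p in auto)
      qed
    qed
    have cT': "card T + 1 \<le> card T'"
    proof -
      have nin: "t1 + (w x g + w g u) \<notin> (\<lambda>t. t + w x u) ` T"
      proof
        assume "t1 + (w x g + w g u) \<in> (\<lambda>t. t + w x u) ` T"
        then obtain s where "s \<in> T" "t1 + (w x g + w g u) = s + w x u" by blast
        then have "s = t1 + (w x g + w g u - w x u)" by (simp add: algebra_simps)
        then show False using t1n \<open>s \<in> T\<close> by simp
      qed
      have "card ((\<lambda>t. t + w x u) ` T) = card T" by (rule card_image) (simp add: inj_on_def)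
      then have "card (insert (t1 + (w x g + w g u)) ((\<lambda>t. t + w x u) ` T)) = card T + 1"
        using nin by simp
      moreover have "insert (t1 + (w x g + w g u)) ((\<lambda>t. t + w x u) ` T) \<subseteq> T'"
        unfolding T'_def using t1 by blast
      ultimately show ?thesis by (metis card_mono finite)
    qed
    have cU': "card Used' = card Used + 2" using g u gu finU unfolding Used'_def by auto
    show ?thesis
    proof (rule less.hyps[OF lt UV'])
      show "r \<in> Used'" "u \<in> Used'" using rU unfolding Used'_def by auto
      show "card Used' + 1 \<le> 2 * card T'" using cT' cU' cardT by simp
    qed (rule paths')
  next
    case False
    then have stuck: "\<forall>g\<in>V - Used. \<forall>u\<in>V - Used. g \<noteq> u \<longrightarrow> w g u + w x g - w x u \<in> K"
      by (auto simp: algebra_simps)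
    have Tne: "T \<noteq> {}" using cardT by auto
    have sgK: "sg K"
      unfolding sg_def
    proof (intro conjI ballI)
      show "0 \<in> K" unfolding K_def by simp
      fix a b assume a: "a \<in> K" and b: "b \<in> K"
      show "a - b \<in> K" unfolding K_def
      proof (intro CollectI ballI)
        fix t assume "t \<in> T"
        then obtain s where s: "s \<in> T" "t = s + b" using transl_surj[of T b t] b unfolding K_def by auto
        then have "t + (a - b) = s + a" by (simp add: algebra_simps)
        then show "t + (a - b) \<in> T" using a s unfolding K_def by auto
      qed
    qed
    have K0: "0 \<in> K" using sgK by (simp add: sg_def)
    have key: "2 * card K \<le> card H \<and> card T \<le> card H"
    proof (cases "x = r")
      case True
      have "T \<subseteq> {0}"
      proof
        fix t assume "t \<in> T"
        then obtain p where p: "distinct p" "p \<noteq> []" "hd p = r" "last p = x" "psum w p = t"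
          using paths by blast
        then have "p = [hd p]" using True distinct_hd_last by metis
        then have "psum w p = psum w [hd p]" by simp
        then have "psum w p = 0" by simp
        then show "t \<in> {0}" using p by simp
      qed
      then have T0: "T = {0}" using Tne by blast
      then have "K = {0}" unfolding K_def by auto
      then show ?thesis using H2 T0 by simp
    next
      case False
      define e where "e = w x r"
      have Te: "\<forall>t\<in>T. t + e \<in> H \<and> t + e \<noteq> 0"
      proof
        fix t assume "t \<in> T"
        then obtain p where p: "distinct p" "p \<noteq> []" "hd p = r" "last p = x" "set p \<subseteq> Used" "psum w p = t"
          using paths by blast
        have "2 \<le> length p"
        proof (rule ccontr)
          assume "\<not> 2 \<le> length p"
          then have "length p = 1" using p(2) by (cases p) (auto simp: Suc_le_eq)
          then have "hd p = last p" by (cases p) auto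
          then show False using p False by simp
        qed
        then have "cyc p V" using p UV unfolding cyc_def by auto
        moreover have "cs w p = t + e" using p unfolding e_def by (simp add: cs_psum)
        ultimately show "t + e \<in> H \<and> t + e \<noteq> 0" using cycH by metis
      qed
      obtain t0 where t0: "t0 \<in> T" using Tne by blast
      have KH: "K \<subseteq> H"
      proof
        fix k assume "k \<in> K"
        then have "t0 + k \<in> T" using t0 unfolding K_def by blast
        then have "(t0 + k) + e \<in> H" "t0 + e \<in> H" using Te t0 by auto
        then have "((t0 + k) + e) - (t0 + e) \<in> H" using sgH unfolding sg_def by blast
        then show "k \<in> H" by (simp add: algebra_simps)
      qed
      have KH2: "(\<lambda>k. k + (t0 + e)) ` K \<subseteq> H"
      proof
        fix y assume "y \<in> (\<lambda>k. k + (t0 + e)) ` K"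
        then obtain k where k: "k \<in> K" "y = k + (t0 + e)" by blast
        then have "t0 + k \<in> T" using t0 unfolding K_def by blast
        then have "(t0 + k) + e \<in> H" using Te by auto
        then show "y \<in> H" using k by (simp add: algebra_simps)
      qed
      have disj: "K \<inter> (\<lambda>k. k + (t0 + e)) ` K = {}"
      proof (rule ccontr)
        assume "K \<inter> (\<lambda>k. k + (t0 + e)) ` K \<noteq> {}"
        then obtain k1 k2 where k1: "k1 \<in> K" and k2: "k2 \<in> K" and eq: "k1 = k2 + (t0 + e)" by blast
        have "t0 + k2 \<in> T" using t0 k2 unfolding K_def by blast
        moreover have "0 - k1 \<in> K" using sgK K0 k1 unfolding sg_def by blast
        ultimately have "(t0 + k2) + (0 - k1) \<in> T" unfolding K_def by blast
        moreover have "(t0 + k2) + (0 - k1) = - e" using eq by (simp add: algebra_simps)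
        ultimately have "- e \<in> T" by simp
        then show False using Te by auto
      qed
      have "card ((\<lambda>k. k + (t0 + e)) ` K) = card K" by (rule card_image) (simp add: inj_on_def)
      then have "card K + card K = card (K \<union> (\<lambda>k. k + (t0 + e)) ` K)"
        using disj by (simp add: card_Un_disjoint)
      also have "\<dots> \<le> card H" using KH KH2 by (intro card_mono) auto
      finally have c1: "2 * card K \<le> card H" by simp
      have "card ((\<lambda>t. t + e) ` T) = card T" by (rule card_image) (simp add: inj_on_def)
      moreover have "(\<lambda>t. t + e) ` T \<subseteq> H" using Te by auto
      ultimately have "card T \<le> card H" by (metis card_mono finite)
      then show ?thesis using c1 by simp
    qed
    have cK: "1 \<le> card K" using K0 by (metis One_nat_def Suc_leI card_gt_0_iff empty_iff finite)
    have cycK: "cs w vs \<in> K" if vs: "cyc vs (V - Used)" for vs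
    proof -
      have "vs \<noteq> []" using vs unfolding cyc_def by auto
      then have "cs w vs = cs (\<lambda>a b. w a b + w x a - w x b) vs" by (rule cs_pot[symmetric])
      also have "\<dots> \<in> K" by (rule cyc_in_sg[OF sgK vs]) (use stuck in auto)
      finally show ?thesis .
    qed
    have "card (V - Used) < 4 * card K"
      by (rule IH[OF sgK _ _ cycK]) (use key cK in auto)
    moreover have "card V = card Used + card (V - Used)"
      using UV finV by (metis card_Diff_subset finU card_mono le_add_diff_inverse)
    ultimately show ?thesis using key cardT by linarith
  qed
qed

lemma main:
  fixes w :: "nat \<Rightarrow> nat \<Rightarrow> 'a::{ab_group_add,finite}"
  shows "sg H \<Longrightarrow> finite V \<Longrightarrow> (\<And>vs. cyc vs V \<Longrightarrow> cs w vs \<in> H \<and> cs w vs \<noteq> 0)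
    \<Longrightarrow> card V < 4 * card H"
proof (induction "card H" arbitrary: H V rule: less_induct)
  case less
  note sgH = less.prems(1) and finV = less.prems(2) and cycH = less.prems(3)
  have H0: "0 \<in> H" using sgH by (simp add: sg_def)
  have cH: "1 \<le> card H" using H0 by (metis One_nat_def Suc_leI card_gt_0_iff empty_iff finite)
  show ?case
  proof (cases "2 \<le> card H")
    case False
    have "card V \<le> 1"
    proof (rule ccontr)
      assume "\<not> card V \<le> 1"
      then obtain a b where ab: "a \<in> V" "b \<in> V" "a \<noteq> b"
        by (metis One_nat_def card_le_Suc0_iff_eq finV not_less_eq_eq)
      have "cyc [a, b] V" using ab unfolding cyc_def by auto
      then have h: "cs w [a, b] \<in> H" "cs w [a, b] \<noteq> 0" using cycH by auto
      have "card H \<le> Suc 0" using False by simp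
      then have "cs w [a, b] = 0" using h(1) H0 card_le_Suc0_iff_eq[of H] by auto
      then show False using h(2) by simp
    qed
    then show ?thesis using cH by simp
  next
    case True
    show ?thesis
    proof (cases "V = {}")
      case True then show ?thesis using cH by simp
    next
      case False
      then obtain r where r: "r \<in> V" by blast
      show ?thesis
      proof (rule chain[OF sgH finV True cycH, of "{r}" r r "{0}"])
        fix K U assume K: "sg K" "card K < card H" "U \<subseteq> V" and cK: "\<And>vs. cyc vs U \<Longrightarrow> cs w vs \<in> K"
        show "card U < 4 * card K"
        proof (rule less.hyps[OF K(2) K(1)])
          show "finite U" using K(3) finV finite_subset by blast
          fix vs assume "cyc vs U"
          moreover then have "cyc vs V" using K(3) unfolding cyc_def by auto
          ultimately show "cs w vs \<in> K \<and> cs w vs \<noteq> 0" using cK cycH by blast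
        qed
      next
        show "\<forall>t\<in>{0}. \<exists>p. distinct p \<and> p \<noteq> [] \<and> hd p = r \<and> last p = r \<and> set p \<subseteq> {r} \<and> psum w p = t"
          by (intro ballI exI[of _ "[r]"]) auto
      qed (use r in auto)
    qed
  qed
qed

theorem theorem1:
  assumes "card (UNIV :: 'a::{ab_group_add,finite} set) \<ge> 2"
  shows "(\<exists>n. 2 \<le> n \<and> \<not> (\<exists>w :: nat \<Rightarrow> nat \<Rightarrow> 'a. zero_sum_free n w))
         \<and> nA TYPE('a) \<le> 8 * card (UNIV :: 'a set)"
proof -
  let ?m = "card (UNIV :: 'a set)"
  have nz: "\<not> (\<exists>w :: nat \<Rightarrow> nat \<Rightarrow> 'a. zero_sum_free (4 * ?m) w)"
  proof
    assume "\<exists>w :: nat \<Rightarrow> nat \<Rightarrow> 'a. zero_sum_free (4 * ?m) w"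
    then obtain w :: "nat \<Rightarrow> nat \<Rightarrow> 'a" where w: "zero_sum_free (4 * ?m) w" by blast
    have "card {..<4 * ?m} < 4 * card (UNIV :: 'a set)"
    proof (rule main[of UNIV])
      show "sg (UNIV :: 'a set)" by (simp add: sg_def)
      fix vs assume "cyc vs {..<4 * ?m}"
      then show "cs w vs \<in> UNIV \<and> cs w vs \<noteq> 0"
        using w unfolding zero_sum_free_def cyc_def cs_def by blast
    qed simp
    then show False by simp
  qed
  have n2: "2 \<le> 4 * ?m" using assms by simp
  have "nA TYPE('a) \<le> 4 * ?m"
    unfolding nA_def by (rule Least_le) (use n2 nz in blast)
  moreover have "\<exists>n. 2 \<le> n \<and> \<not> (\<exists>w :: nat \<Rightarrow> nat \<Rightarrow> 'a. zero_sum_free n w)"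
    using n2 nz by blast
  ultimately show ?thesis by simp
qed

end
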